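(* Let $q$ be a prime power, $d$ a positive integer, and $m,n\ge 1$. Let $\Phi = (\phi_1, \ldots, \phi_n) : \mathbb{F}_q^m \to \mathbb{F}_q^n$ be a polynomial map with $\phi_i \in \mathbb{F}_q[x_1, \ldots, x_m]$ and $\deg \phi_i \le d$ for all $1 \le i \le n$. Suppose there is $\mu \in \mathbb{F}_q[x_1, \ldots, x_m]$ with $\sum_{a \in \Phi^{-1}(0)} \mu(a) \neq 0$. Then there exists a polynomial $P \in \mathbb{F}_q[x_1, \ldots, x_n]$ of total degree at most $(q-1)(n - m/d) + (\deg \mu)/d$ such that $P(0) \neq 0$ and $\operatorname{supp}(P) \subset \operatorname{im}(\Phi)$.
   Context: For $P \in \mathbb{F}_q[x_1,\ldots,x_n]$, $\operatorname{supp}(P) = \{x \in \mathbb{F}_q^n : P(x) \neq 0\}$. $\deg$ denotes total degree, and $\operatorname{im}(\Phi)$ is the image of $\Phi$. *)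

theory Defs
  imports Complex_Main "HOL-Library.Poly_Mapping"
begin

type_synonym ('v, 'a) mpoly = "('v \<Rightarrow>\<^sub>0 nat) \<Rightarrow>\<^sub>0 'a"

definition mon_deg :: "('v \<Rightarrow>\<^sub>0 nat) \<Rightarrow> nat" where
  "mon_deg mon = (\<Sum>i\<in>Poly_Mapping.keys mon. Poly_Mapping.lookup mon i)"

text \<open>Total degree (the zero polynomial gets degree 0).\<close>
definition tdeg :: "('v, 'a::zero) mpoly \<Rightarrow> nat" where
  "tdeg p = Max (insert 0 (mon_deg ` Poly_Mapping.keys p))"

definition mpeval :: "('v, 'a::comm_semiring_1) mpoly \<Rightarrow> ('v \<Rightarrow> 'a) \<Rightarrow> 'a" where
  "mpeval p x = (\<Sum>mon\<in>Poly_Mapping.keys p. Poly_Mapping.lookup p mon * (\<Prod>i\<in>Poly_Mapping.keys mon. x i ^ Poly_Mapping.lookup mon i))"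

definition polymap :: "('n \<Rightarrow> ('m, 'a::comm_semiring_1) mpoly) \<Rightarrow> ('m \<Rightarrow> 'a) \<Rightarrow> ('n \<Rightarrow> 'a)" where
  "polymap \<phi> x = (\<lambda>i. mpeval (\<phi> i) x)"

end

theory Submission
  imports Defs "HOL-Computational_Algebra.Polynomial" "HOL-Library.FuncSet"
begin

definition monval :: "('v::finite \<Rightarrow>\<^sub>0 nat) \<Rightarrow> ('v \<Rightarrow> 'a::comm_semiring_1) \<Rightarrow> 'a" where
  "monval m x = (\<Prod>i\<in>UNIV. x i ^ Poly_Mapping.lookup m i)"

lemma mon_deg_UNIV: "mon_deg (m :: 'v::finite \<Rightarrow>\<^sub>0 nat) = (\<Sum>i\<in>UNIV. Poly_Mapping.lookup m i)"
  unfolding mon_deg_def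
  by (rule sum.mono_neutral_left) (auto simp: in_keys_iff)

lemma monval_keys: "(\<Prod>i\<in>Poly_Mapping.keys m. x i ^ Poly_Mapping.lookup m i) = monval (m::'v::finite \<Rightarrow>\<^sub>0 nat) (x :: _ \<Rightarrow> 'a::comm_semiring_1)"
  unfolding monval_def
  by (rule prod.mono_neutral_left) (auto simp: in_keys_iff)

lemma mpeval_alt: "mpeval (p :: ('v::finite, 'a::comm_semiring_1) mpoly) x = (\<Sum>m\<in>Poly_Mapping.keys p. Poly_Mapping.lookup p m * monval m x)"
  unfolding mpeval_def monval_keys ..

lemma mpeval_superset:
  assumes "finite S" "Poly_Mapping.keys p \<subseteq> S"
  shows "mpeval (p :: ('v::finite, 'a::comm_semiring_1) mpoly) x = (\<Sum>m\<in>S. Poly_Mapping.lookup p m * monval m x)"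
  unfolding mpeval_alt using assms
  by (intro sum.mono_neutral_left) (auto simp: in_keys_iff)

lemma mpeval_add: "mpeval (p + q :: ('v::finite, 'a::comm_semiring_1) mpoly) x = mpeval p x + mpeval q x"
proof -
  let ?S = "Poly_Mapping.keys p \<union> Poly_Mapping.keys q"
  have "mpeval (p+q) x = (\<Sum>m\<in>?S. Poly_Mapping.lookup (p+q) m * monval m x)"
    using keys_add[of p q] by (intro mpeval_superset) auto
  also have "\<dots> = (\<Sum>m\<in>?S. Poly_Mapping.lookup p m * monval m x) + (\<Sum>m\<in>?S. Poly_Mapping.lookup q m * monval m x)"
    by (simp add: lookup_add distrib_right sum.distrib)
  also have "\<dots> = mpeval p x + mpeval q x"
    by (subst (1 2) mpeval_superset[where S="?S"]) auto
  finally show ?thesis .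
qed

lemma mpeval_zero: "mpeval 0 x = 0"
  by (simp add: mpeval_def)

lemma mpeval_single: "mpeval (Poly_Mapping.single (m::'v::finite \<Rightarrow>\<^sub>0 nat) (c::'a::comm_semiring_1)) x = c * monval m x"
  by (cases "c = 0") (auto simp: mpeval_alt)

lemma tdeg_le: "tdeg p \<le> D \<longleftrightarrow> (\<forall>m\<in>Poly_Mapping.keys p. mon_deg m \<le> D)"
  unfolding tdeg_def by (subst Max_le_iff) auto

definition PF :: "nat \<Rightarrow> (('v::finite \<Rightarrow> 'a::comm_semiring_1) \<Rightarrow> 'a) \<Rightarrow> bool" where
  "PF D f \<longleftrightarrow> (\<exists>L. (\<forall>p\<in>set L. mon_deg (fst p) \<le> D) \<and> (\<forall>x. f x = (\<Sum>p\<leftarrow>L. snd p * monval (fst p) x)))"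

lemma PF_mono: "PF D f \<Longrightarrow> D \<le> D' \<Longrightarrow> PF D' f"
  unfolding PF_def by (meson order_trans)

lemma PF_const: "PF 0 (\<lambda>_. c)"
  unfolding PF_def
  by (rule exI[of _ "[(0,c)]"]) (auto simp: mon_deg_def monval_def)

lemma PF_var: "PF 1 (\<lambda>x. x i)"
  unfolding PF_def
proof (rule exI[of _ "[(Poly_Mapping.single i 1, 1)]"], intro conjI allI ballI)
  fix x :: "'a \<Rightarrow> 'b"
  have "monval (Poly_Mapping.single i 1) x = (\<Prod>j\<in>UNIV. if j = i then x i else 1)"
    unfolding monval_def by (intro prod.cong) (auto simp: lookup_single when_def)
  also have "\<dots> = x i" by (subst prod.delta) auto
  finally show "x i = (\<Sum>p\<leftarrow>[(Poly_Mapping.single i 1, 1)]. snd p * monval (fst p) x)" by simp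
qed (auto simp: mon_deg_def)

lemma PF_add: "PF D f \<Longrightarrow> PF D g \<Longrightarrow> PF D (\<lambda>x. f x + g x)"
  unfolding PF_def
proof (elim exE conjE)
  fix L1 L2 assume *: "\<forall>p\<in>set L1. mon_deg (fst p) \<le> D" "\<forall>x. f x = (\<Sum>p\<leftarrow>L1. snd p * monval (fst p) x)"
     "\<forall>p\<in>set L2. mon_deg (fst p) \<le> D" "\<forall>x. g x = (\<Sum>p\<leftarrow>L2. snd p * monval (fst p) x)"
  show "\<exists>L. (\<forall>p\<in>set L. mon_deg (fst p) \<le> D) \<and> (\<forall>x. f x + g x = (\<Sum>p\<leftarrow>L. snd p * monval (fst p) x))"
    by (rule exI[of _ "L1 @ L2"]) (use * in auto)
qed

lemma monval_add: "monval (m + n) x = monval m x * monval n x"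
  unfolding monval_def by (simp add: lookup_add power_add prod.distrib)

lemma mon_deg_add: "mon_deg ((m::'v::finite \<Rightarrow>\<^sub>0 nat) + n) = mon_deg m + mon_deg n"
  unfolding mon_deg_UNIV by (simp add: lookup_add sum.distrib)

lemma sum_list_prod_aux:
  "(\<Sum>p\<leftarrow>concat (map (\<lambda>p. map (\<lambda>q. (fst p + fst q, snd p * snd q)) L2) L1). snd p * monval (fst p) x)
   = (\<Sum>p\<leftarrow>L1. snd p * monval (fst p) x) * (\<Sum>p\<leftarrow>L2. snd p * monval (fst p) (x::'v::finite \<Rightarrow> 'a::comm_semiring_1))"
proof (induction L1)
  case Nil then show ?case by simp
next
  case (Cons a L1)
  have "(\<Sum>q\<leftarrow>L2. snd a * snd q * monval (fst a + fst q) x) = snd a * monval (fst a) x * (\<Sum>p\<leftarrow>L2. snd p * monval (fst p) x)"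
    by (induction L2) (auto simp: monval_add algebra_simps)
  with Cons show ?case by (simp add: o_def distrib_right)
qed

lemma PF_mult: "PF D1 f \<Longrightarrow> PF D2 g \<Longrightarrow> PF (D1 + D2) (\<lambda>x. f x * g x)"
  unfolding PF_def
proof (elim exE conjE)
  fix L1 L2 assume *: "\<forall>p\<in>set L1. mon_deg (fst p) \<le> D1" "\<forall>x. f x = (\<Sum>p\<leftarrow>L1. snd p * monval (fst p) x)"
     "\<forall>p\<in>set L2. mon_deg (fst p) \<le> D2" "\<forall>x. g x = (\<Sum>p\<leftarrow>L2. snd p * monval (fst p) x)"
  show "\<exists>L. (\<forall>p\<in>set L. mon_deg (fst p) \<le> D1 + D2) \<and> (\<forall>x. f x * g x = (\<Sum>p\<leftarrow>L. snd p * monval (fst p) x))"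
    by (rule exI[of _ "concat (map (\<lambda>p. map (\<lambda>q. (fst p + fst q, snd p * snd q)) L2) L1)"])
       (use * in \<open>auto simp: sum_list_prod_aux mon_deg_add intro!: add_mono\<close>)
qed

lemma PF_sum: "finite S \<Longrightarrow> (\<And>i. i \<in> S \<Longrightarrow> PF D (f i)) \<Longrightarrow> PF D (\<lambda>x. \<Sum>i\<in>S. f i x)"
proof (induction S rule: finite_induct)
  case empty then show ?case using PF_mono[OF PF_const[of 0]] by simp
next
  case (insert a S) then show ?case by (simp add: PF_add)
qed

lemma PF_prod: "finite S \<Longrightarrow> (\<And>i. i \<in> S \<Longrightarrow> PF (D i) (f i)) \<Longrightarrow> PF (\<Sum>i\<in>S. D i) (\<lambda>x. \<Prod>i\<in>S. f i x)"
proof (induction S rule: finite_induct)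
  case empty then show ?case using PF_const[of 1] by simp
next
  case (insert a S) then show ?case by (simp add: PF_mult)
qed

lemma PF_pow: "PF D f \<Longrightarrow> PF (k * D) (\<lambda>x. f x ^ k)"
proof (induction k)
  case 0 then show ?case using PF_const[of 1] by simp
next
  case (Suc k) then show ?case using PF_mult[of D f "k*D" "\<lambda>x. f x ^ k"] by simp
qed

lemma PF_mpoly: "PF (tdeg p) (mpeval (p :: ('v::finite, 'a::comm_semiring_1) mpoly))"
proof -
  obtain xs where xs: "set xs = Poly_Mapping.keys p" "distinct xs"
    using finite_distinct_list[of "Poly_Mapping.keys p"] by auto
  show ?thesis unfolding PF_def
  proof (rule exI[of _ "map (\<lambda>m. (m, Poly_Mapping.lookup p m)) xs"], intro conjI allI ballI)
    fix q assume "q \<in> set (map (\<lambda>m. (m, Poly_Mapping.lookup p m)) xs)"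
    then show "mon_deg (fst q) \<le> tdeg p" using xs tdeg_le[of p "tdeg p"] by auto
  next
    fix x
    show "mpeval p x = (\<Sum>q\<leftarrow>map (\<lambda>m. (m, Poly_Mapping.lookup p m)) xs. snd q * monval (fst q) x)"
      using xs by (simp add: mpeval_alt sum_list_distinct_conv_sum_set o_def)
  qed
qed

lemma PF_to_mpoly:
  assumes "PF D f"
  shows "\<exists>P :: ('v::finite, 'a::comm_semiring_1) mpoly. tdeg P \<le> D \<and> (\<forall>x. mpeval P x = f x)"
proof -
  obtain L where L: "\<forall>p\<in>set L. mon_deg (fst p) \<le> D" "\<forall>x. f x = (\<Sum>p\<leftarrow>L. snd p * monval (fst p) x)"
    using assms unfolding PF_def by blast
  define P where "P = (\<Sum>p\<leftarrow>L. Poly_Mapping.single (fst p) (snd p))"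
  have ev: "mpeval P x = (\<Sum>p\<leftarrow>L. snd p * monval (fst p) x)" for x
    unfolding P_def by (induction L) (auto simp: mpeval_zero mpeval_add mpeval_single)
  have ks: "Poly_Mapping.keys P \<subseteq> fst ` set L"
    unfolding P_def
  proof (induction L)
    case (Cons a L)
    have "Poly_Mapping.keys (Poly_Mapping.single (fst a) (snd a) + (\<Sum>p\<leftarrow>L. Poly_Mapping.single (fst p) (snd p))) \<subseteq> {fst a} \<union> fst ` set L"
      using keys_add[of "Poly_Mapping.single (fst a) (snd a)" "(\<Sum>p\<leftarrow>L. Poly_Mapping.single (fst p) (snd p))"] Cons.IH
      by (auto split: if_splits)
    then show ?case by auto
  qed simp
  show ?thesis
    by (rule exI[of _ P]) (use L ev ks in \<open>auto simp: tdeg_le\<close>)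
qed


lemma card_ge2: "2 \<le> card (UNIV :: 'a::{finite,field} set)"
proof -
  have "{0::'a, 1} \<subseteq> UNIV" by simp
  then have "card {0::'a,1} \<le> card (UNIV :: 'a set)" by (intro card_mono) auto
  then show ?thesis by simp
qed

lemma ff_pow: fixes b :: "'a::{finite,field}" assumes "b \<noteq> 0"
  shows "b ^ (card (UNIV :: 'a set) - 1) = 1"
proof -
  let ?U = "UNIV - {0::'a}"
  have bij: "bij_betw (\<lambda>t. b * t) ?U ?U"
    by (rule bij_betwI[where g="\<lambda>t. t / b"]) (use assms in auto)
  have "(\<Prod>t\<in>?U. t) = (\<Prod>t\<in>?U. b * t)"
    using prod.reindex_bij_betw[OF bij, of "\<lambda>t. t"] by simp
  also have "\<dots> = b ^ card ?U * (\<Prod>t\<in>?U. t)" by (simp add: prod.distrib)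
  finally have "b ^ card ?U = 1"
    by (subgoal_tac "(\<Prod>t\<in>?U. t) \<noteq> 0") (auto)
  moreover have "card ?U = card (UNIV :: 'a set) - 1" by (simp add: card_Diff_singleton)
  ultimately show ?thesis by simp
qed

lemma ff_ind: fixes s :: "'a::{finite,field}"
  shows "1 - s ^ (card (UNIV :: 'a set) - 1) = (if s = 0 then 1 else 0)"
  using ff_pow[of s] card_ge2[where 'a='a] by (auto simp: power_0_left)

lemma ff_card_zero: "of_nat (card (UNIV :: 'a::{finite,field} set)) = (0::'a)"
proof -
  have bij: "bij_betw (\<lambda>t. t + 1) (UNIV::'a set) UNIV"
    by (rule bij_betwI[where g="\<lambda>t. t - 1"]) auto
  have "(\<Sum>t\<in>UNIV. t) = (\<Sum>t\<in>(UNIV::'a set). t + 1)"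
    using sum.reindex_bij_betw[OF bij, of "\<lambda>t. t"] by simp
  also have "\<dots> = (\<Sum>t\<in>UNIV. t) + of_nat (card (UNIV :: 'a set))" by (simp add: sum.distrib)
  finally show ?thesis by simp
qed

lemma ff_sum_pow: assumes "e < card (UNIV :: 'a::{finite,field} set) - 1"
  shows "(\<Sum>t\<in>(UNIV::'a set). t ^ e) = 0"
proof (cases "e = 0")
  case True then show ?thesis using ff_card_zero by simp
next
  case False
  have "\<exists>b::'a. b \<noteq> 0 \<and> b ^ e \<noteq> 1"
  proof (rule ccontr)
    assume "\<not> ?thesis"
    then have sub: "UNIV - {0::'a} \<subseteq> {x. poly (monom 1 e - 1) x = 0}"
      by (auto simp: poly_monom)
    have ne: "monom (1::'a) e - 1 \<noteq> 0"
    proof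
      assume "monom (1::'a) e - 1 = 0"
      then have "coeff (monom (1::'a) e - 1) e = 0" by simp
      with False show False by (simp add: coeff_monom)
    qed
    have deg: "degree (monom (1::'a) e - 1) \<le> e"
      by (rule order_trans[OF degree_diff_le_max]) (auto simp: degree_monom_le)
    have "card (UNIV - {0::'a}) \<le> card {x. poly (monom 1 e - 1) x = (0::'a)}"
      by (rule card_mono[OF _ sub]) simp
    also have "\<dots> \<le> e" using card_poly_roots_bound[OF ne] deg by simp
    finally show False using assms by (simp add: card_Diff_singleton)
  qed
  then obtain b :: 'a where b: "b \<noteq> 0" "b ^ e \<noteq> 1" by blast
  have bij: "bij_betw (\<lambda>t. b * t) (UNIV::'a set) UNIV"
    by (rule bij_betwI[where g="\<lambda>t. t / b"]) (use b in auto)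
  have "(\<Sum>t\<in>UNIV. t ^ e) = (\<Sum>t\<in>(UNIV::'a set). (b * t) ^ e)"
    using sum.reindex_bij_betw[OF bij, of "\<lambda>t. t ^ e"] by simp
  also have "\<dots> = b ^ e * (\<Sum>t\<in>UNIV. t ^ e)" by (simp add: power_mult_distrib sum_distrib_left)
  finally have "(b ^ e - 1) * (\<Sum>t\<in>(UNIV::'a set). t ^ e) = 0" by (simp add: algebra_simps)
  with b show ?thesis by simp
qed

lemma monval_sum_zero:
  fixes m :: "'v::finite \<Rightarrow>\<^sub>0 nat"
  assumes "mon_deg m < card (UNIV :: 'v set) * (card (UNIV :: 'a::{finite,field} set) - 1)"
  shows "(\<Sum>x\<in>UNIV. monval m (x :: 'v \<Rightarrow> 'a)) = 0"
proof -
  let ?k = "card (UNIV :: 'a set) - 1"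
  obtain i where i: "Poly_Mapping.lookup m i < ?k"
  proof (rule ccontr)
    assume "\<not> thesis"
    then have "\<forall>i. ?k \<le> Poly_Mapping.lookup m i" using that by (meson not_less)
    then have "(\<Sum>i\<in>(UNIV::'v set). ?k) \<le> (\<Sum>i\<in>UNIV. Poly_Mapping.lookup m i)"
      by (intro sum_mono) auto
    then show False using assms by (simp add: mon_deg_UNIV mult.commute)
  qed
  define A where "A x = (\<Prod>j\<in>UNIV - {i}. (x::'v \<Rightarrow> 'a) j ^ Poly_Mapping.lookup m j)" for x
  have mv: "monval m x = x i ^ Poly_Mapping.lookup m i * A x" for x
    unfolding monval_def A_def by (subst prod.remove[of _ i]) auto
  have Aupd: "A (x(i := t)) = A x" for x t
    unfolding A_def by (intro prod.cong) auto
  let ?Z = "{x::'v \<Rightarrow> 'a. x i = 0}"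
  have bij: "bij_betw (\<lambda>(x, t). x(i := t)) (?Z \<times> UNIV) UNIV"
  proof (rule bij_betwI[where g="\<lambda>y. (y(i := 0), y i)"])
    show "(\<lambda>(x, t). x(i := t)) \<in> ?Z \<times> UNIV \<rightarrow> UNIV" by auto
    show "(\<lambda>y. (y(i := 0), y i)) \<in> UNIV \<rightarrow> ?Z \<times> UNIV" by auto
    show "(\<lambda>y. (y(i := 0), y i)) ((\<lambda>(x, t). x(i := t)) p) = p" if "p \<in> ?Z \<times> UNIV" for p
      using that by (cases p) (auto simp: fun_eq_iff)
  qed auto
  have "(\<Sum>x\<in>UNIV. monval m x) = (\<Sum>p\<in>?Z \<times> UNIV. monval m ((\<lambda>(x, t). x(i := t)) p))"
    using sum.reindex_bij_betw[OF bij, of "monval m"] by simp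
  also have "\<dots> = (\<Sum>x\<in>?Z. \<Sum>t\<in>UNIV. monval m (x(i := t)))"
    by (subst sum.cartesian_product) (simp add: case_prod_unfold)
  also have "\<dots> = (\<Sum>x\<in>?Z. \<Sum>t\<in>UNIV. t ^ Poly_Mapping.lookup m i * A x)"
    by (simp add: mv Aupd)
  also have "\<dots> = (\<Sum>x\<in>?Z. A x * (\<Sum>t\<in>UNIV. t ^ Poly_Mapping.lookup m i))"
    by (simp add: sum_distrib_left mult.commute)
  also have "\<dots> = 0" using ff_sum_pow[OF i] by simp
  finally show ?thesis .
qed

lemma PF_sum_zero:
  assumes "PF D (f :: ('v::finite \<Rightarrow> 'a::{finite,field}) \<Rightarrow> 'a)" "D < card (UNIV :: 'v set) * (card (UNIV :: 'a set) - 1)"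
  shows "(\<Sum>x\<in>UNIV. f x) = 0"
proof -
  obtain L where L: "\<forall>p\<in>set L. mon_deg (fst p) \<le> D" "\<forall>x. f x = (\<Sum>p\<leftarrow>L. snd p * monval (fst p) x)"
    using assms unfolding PF_def by blast
  have gen: "(\<Sum>x\<in>UNIV. \<Sum>p\<leftarrow>L'. snd p * monval (fst p) x) = 0"
    if "\<forall>p\<in>set L'. mon_deg (fst p) \<le> D" for L' :: "(('v \<Rightarrow>\<^sub>0 nat) \<times> 'a) list"
    using that
  proof (induction L')
    case (Cons a L')
    have "mon_deg (fst a) < card (UNIV :: 'v set) * (card (UNIV :: 'a set) - 1)"
      using Cons.prems assms(2) by auto
    then have "(\<Sum>x\<in>UNIV. snd a * monval (fst a) (x::'v \<Rightarrow> 'a)) = 0"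
      by (simp add: sum_distrib_left[symmetric] monval_sum_zero)
    with Cons show ?case by (simp add: sum.distrib)
  qed simp
  have "(\<Sum>x\<in>UNIV. f x) = (\<Sum>x\<in>UNIV. \<Sum>p\<leftarrow>L. snd p * monval (fst p) x)"
    using L(2) by simp
  also have "\<dots> = 0" using gen L(1) by blast
  finally show ?thesis .
qed


lemma PF_affpow: "PF D g \<Longrightarrow> PF (e * D) (\<lambda>x. c0 + c1 * g x ^ e)"
proof -
  assume "PF D g"
  then have "PF (0 + e * D) (\<lambda>x. c1 * g x ^ e)" by (intro PF_mult PF_const PF_pow)
  then show ?thesis using PF_add[OF PF_mono[OF PF_const[of c0]]] by simp
qed

lemma binom_aux:
  fixes t s :: "'a::comm_ring_1"
  shows "1 - (t - s) ^ k = (\<Sum>j\<le>k. ((if j = 0 then 1 else 0) - of_nat (k choose j) * (-1) ^ j * t ^ (k - j)) * s ^ j)"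
proof -
  have "(t - s) ^ k = (-s + t) ^ k" by simp
  also have "\<dots> = (\<Sum>j\<le>k. of_nat (k choose j) * (-s) ^ j * t ^ (k - j))" by (rule binomial_ring)
  also have "\<dots> = (\<Sum>j\<le>k. of_nat (k choose j) * (-1) ^ j * t ^ (k - j) * s ^ j)"
    by (intro sum.cong refl) (simp add: power_minus[of s] algebra_simps)
  finally have 1: "(t - s) ^ k = \<dots>" .
  have 2: "(\<Sum>j\<le>k. (if j = 0 then 1 else 0) * s ^ j) = (1::'a)"
  proof -
    have "(\<Sum>j\<le>k. (if j = 0 then 1 else 0) * s ^ j) = (\<Sum>j\<le>k. if j = 0 then 1 else (0::'a))"
      by (intro sum.cong) auto
    then show ?thesis by simp
  qed
  show ?thesis
    by (simp add: left_diff_distrib sum_subtractf 1 2)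
qed

theorem lemma2p2:
  fixes \<phi> :: "'n::finite \<Rightarrow> ('m::finite, 'a::{finite,field}) mpoly"
    and \<mu> :: "('m, 'a) mpoly"
    and d :: nat
  assumes "d > 0"
    and "\<forall>i. tdeg (\<phi> i) \<le> d"
    and "(\<Sum>a\<in>{a. polymap \<phi> a = (\<lambda>_. 0)}. mpeval \<mu> a) \<noteq> 0"
  shows "\<exists>P :: ('n, 'a) mpoly.
           real (tdeg P) \<le> (real (card (UNIV :: 'a set)) - 1) * (real (card (UNIV :: 'n set)) - real (card (UNIV :: 'm set)) / real d)
                            + real (tdeg \<mu>) / real d
         \<and> mpeval P (\<lambda>_. 0) \<noteq> 0
         \<and> {y. mpeval P y \<noteq> 0} \<subseteq> range (polymap \<phi>)"
proof -
  define k where "k = card (UNIV :: 'a set) - 1"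
  define N where "N = card (UNIV :: 'n set)"
  define M where "M = card (UNIV :: 'm set)"
  define T where "T = tdeg \<mu>"
  define R where "R = real k * (real N - real M / real d) + real T / real d"
  define w where "w j t = (if j = 0 then 1 else 0) - of_nat (k choose j) * (-1) ^ j * t ^ (k - j)" for j and t :: 'a
  define Q where "Q y = (\<Sum>a\<in>UNIV. mpeval \<mu> a * (\<Prod>i\<in>UNIV. 1 - (mpeval (\<phi> i) a - y i) ^ k))" for y :: "'n \<Rightarrow> 'a"
  define B where "B = PiE (UNIV :: 'n set) (\<lambda>_. {..k})"
  define C where "C \<beta> = (\<Sum>a\<in>UNIV. mpeval \<mu> a * (\<Prod>i\<in>UNIV. w (\<beta> i) (mpeval (\<phi> i) a)))" for \<beta>
  have k1: "real (card (UNIV :: 'a set)) - 1 = real k"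
    unfolding k_def using card_ge2[where 'a='a] by simp
  have E1: "1 - (t - s) ^ k = (\<Sum>j\<le>k. w j t * s ^ j)" for t s
    unfolding w_def by (rule binom_aux)
  have Qsupp: "Q y = (\<Sum>a\<in>{a. polymap \<phi> a = y}. mpeval \<mu> a)" for y
  proof -
    have ind: "(\<Prod>i\<in>UNIV. 1 - (mpeval (\<phi> i) a - y i) ^ k) = (if polymap \<phi> a = y then 1 else 0)" for a
    proof (cases "polymap \<phi> a = y")
      case True
      have z: "mpeval (\<phi> i) a - y i = 0" for i using True by (auto simp: polymap_def)
      have "1 - (mpeval (\<phi> i) a - y i) ^ k = 1" for i
        unfolding k_def by (simp only: ff_ind) (simp add: z)
      then have hp: "(\<Prod>i\<in>UNIV. 1 - (mpeval (\<phi> i) a - y i) ^ k) = (\<Prod>i\<in>(UNIV::'n set). (1::'a))"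
        by (intro prod.cong) auto
      show ?thesis using True by (simp only: hp if_True prod.neutral_const refl)
    next
      case False
      then obtain i where "mpeval (\<phi> i) a \<noteq> y i" by (auto simp: polymap_def)
      then have "1 - (mpeval (\<phi> i) a - y i) ^ k = 0" unfolding k_def by (simp only: ff_ind) simp
      then show ?thesis using False by (auto intro!: prod_zero)
    qed
    have "Q y = (\<Sum>a\<in>UNIV. if polymap \<phi> a = y then mpeval \<mu> a else 0)"
      unfolding Q_def ind by (intro sum.cong) auto
    also have "\<dots> = (\<Sum>a\<in>{a\<in>UNIV. polymap \<phi> a = y}. mpeval \<mu> a)"
      by (rule sum.inter_filter[symmetric]) simp
    finally show ?thesis by simp
  qed
  have E3: "Q y = (\<Sum>\<beta>\<in>B. C \<beta> * (\<Prod>i\<in>UNIV. y i ^ \<beta> i))" for y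
  proof -
    have "Q y = (\<Sum>a\<in>UNIV. mpeval \<mu> a * (\<Sum>\<beta>\<in>B. \<Prod>i\<in>UNIV. w (\<beta> i) (mpeval (\<phi> i) a) * y i ^ \<beta> i))"
      unfolding Q_def E1 B_def by (subst prod_sum_PiE) auto
    also have "\<dots> = (\<Sum>a\<in>UNIV. \<Sum>\<beta>\<in>B. mpeval \<mu> a * (\<Prod>i\<in>UNIV. w (\<beta> i) (mpeval (\<phi> i) a)) * (\<Prod>i\<in>UNIV. y i ^ \<beta> i))"
      by (simp add: sum_distrib_left prod.distrib mult.assoc)
    also have "\<dots> = (\<Sum>\<beta>\<in>B. \<Sum>a\<in>UNIV. mpeval \<mu> a * (\<Prod>i\<in>UNIV. w (\<beta> i) (mpeval (\<phi> i) a)) * (\<Prod>i\<in>UNIV. y i ^ \<beta> i))"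
      by (rule sum.swap)
    also have "\<dots> = (\<Sum>\<beta>\<in>B. C \<beta> * (\<Prod>i\<in>UNIV. y i ^ \<beta> i))"
      unfolding C_def by (simp add: sum_distrib_right)
    finally show ?thesis .
  qed
  have PFphi: "PF d (mpeval (\<phi> i))" for i
    using PF_mpoly[of "\<phi> i"] assms(2) PF_mono by blast
  have E4: "PF (T + (\<Sum>i\<in>UNIV. (k - \<beta> i) * d)) (\<lambda>a. mpeval \<mu> a * (\<Prod>i\<in>UNIV. w (\<beta> i) (mpeval (\<phi> i) a)))" for \<beta>
  proof -
    have "PF ((k - \<beta> i) * d) (\<lambda>a. w (\<beta> i) (mpeval (\<phi> i) a))" for i
      unfolding w_def using PF_affpow[OF PFphi[of i], of "k - \<beta> i" "if \<beta> i = 0 then 1 else 0" "- (of_nat (k choose \<beta> i) * (-1) ^ \<beta> i)"]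
      by simp
    then show ?thesis unfolding T_def
      by (intro PF_mult PF_mpoly PF_prod) auto
  qed
  have E5: "C \<beta> = 0" if "T + (\<Sum>i\<in>UNIV. (k - \<beta> i) * d) < M * k" for \<beta>
    unfolding C_def using PF_sum_zero[OF E4[of \<beta>]] that unfolding M_def k_def by simp
  define G where "G = {\<beta>\<in>B. \<not> T + (\<Sum>i\<in>UNIV. (k - \<beta> i) * d) < M * k}"
  have finB: "finite B" unfolding B_def by (intro finite_PiE) auto
  have QG: "Q y = (\<Sum>\<beta>\<in>G. C \<beta> * (\<Prod>i\<in>UNIV. y i ^ \<beta> i))" for y
    unfolding E3 using finB E5 by (intro sum.mono_neutral_right) (auto simp: G_def)
  have Gdeg: "real (\<Sum>i\<in>UNIV. \<beta> i) \<le> R" if "\<beta> \<in> G" for \<beta>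
  proof -
    have bk: "\<beta> i \<le> k" for i using that unfolding G_def B_def by auto
    have "(\<Sum>i\<in>UNIV. k - \<beta> i) + (\<Sum>i\<in>UNIV. \<beta> i) = (\<Sum>i\<in>(UNIV::'n set). k)"
      by (subst sum.distrib[symmetric]) (use bk in simp)
    then have sn: "(\<Sum>i\<in>UNIV. k - \<beta> i) + (\<Sum>i\<in>UNIV. \<beta> i) = N * k"
      unfolding N_def by simp
    have s: "real (\<Sum>i\<in>UNIV. k - \<beta> i) + real (\<Sum>i\<in>UNIV. \<beta> i) = real N * real k"
      by (simp only: of_nat_add[symmetric] of_nat_mult[symmetric] sn)
    have "M * k \<le> T + (\<Sum>i\<in>UNIV. k - \<beta> i) * d"
      using that unfolding G_def by (simp add: sum_distrib_right)
    then have "real (M * k) \<le> real (T + (\<Sum>i\<in>UNIV. k - \<beta> i) * d)"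
      by (simp only: of_nat_le_iff)
    then have h: "real M * real k \<le> real T + real (\<Sum>i\<in>UNIV. k - \<beta> i) * real d"
      by (simp only: of_nat_add of_nat_mult)
    have dpos: "real d > 0" using assms(1) by simp
    define S where "S = real (\<Sum>i\<in>UNIV. \<beta> i)"
    define S' where "S' = real (\<Sum>i\<in>UNIV. k - \<beta> i)"
    have s2: "S = real N * real k - S'" using s unfolding S_def S'_def by linarith
    have h2: "real M * real k \<le> real T + S' * real d" using h unfolding S'_def .
    have dR: "real d * R = real k * real N * real d - real k * real M + real T"
      unfolding R_def using dpos by (simp add: algebra_simps)
    have "real d * S = real d * (real N * real k) - S' * real d"
      unfolding s2 by (simp add: algebra_simps)
    then have "real d * S \<le> real d * R"
      unfolding dR using h2 by (simp add: algebra_simps)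
    then have "S \<le> R" using dpos by simp
    then show ?thesis unfolding S_def .
  qed
  have Q0: "Q (\<lambda>_. 0) \<noteq> 0" using Qsupp assms(3) by simp
  have Gne: "G \<noteq> {}"
  proof
    assume "G = {}"
    then have "Q (\<lambda>_. 0) = 0" using QG by simp
    with Q0 show False by simp
  qed
  then obtain \<beta>0 where "\<beta>0 \<in> G" by blast
  then have R0: "R \<ge> 0" using Gdeg[of \<beta>0] by linarith
  define D where "D = nat \<lfloor>R\<rfloor>"
  have DR: "real D \<le> R" unfolding D_def using R0 by simp
  have PFQ: "PF D Q"
  proof -
    have "PF D (\<lambda>y. \<Sum>\<beta>\<in>G. C \<beta> * (\<Prod>i\<in>UNIV. y i ^ \<beta> i))"
    proof (rule PF_sum)
      show "finite G" using finB unfolding G_def by simp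
    next
      fix \<beta> assume b: "\<beta> \<in> G"
      have "PF (0 + (\<Sum>i\<in>UNIV. \<beta> i * 1)) (\<lambda>y. C \<beta> * (\<Prod>i\<in>UNIV. y i ^ \<beta> i))"
        by (intro PF_mult PF_const PF_prod PF_pow PF_var) auto
      moreover have "(\<Sum>i\<in>UNIV. \<beta> i) \<le> D"
        unfolding D_def using Gdeg[OF b] by (simp add: le_nat_floor)
      ultimately show "PF D (\<lambda>y. C \<beta> * (\<Prod>i\<in>UNIV. y i ^ \<beta> i))"
        using PF_mono[of "0 + (\<Sum>i\<in>UNIV. \<beta> i * 1)" _ D] by simp
    qed
    moreover have "Q = (\<lambda>y. \<Sum>\<beta>\<in>G. C \<beta> * (\<Prod>i\<in>UNIV. y i ^ \<beta> i))"
      using QG by (rule ext)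
    ultimately show ?thesis by simp
  qed
  obtain P :: "('n, 'a) mpoly" where P: "tdeg P \<le> D" "\<And>y. mpeval P y = Q y"
    using PF_to_mpoly[OF PFQ] by blast
  show ?thesis
  proof (intro exI[of _ P] conjI)
    show "real (tdeg P) \<le> (real (card (UNIV :: 'a set)) - 1) * (real (card (UNIV :: 'n set)) - real (card (UNIV :: 'm set)) / real d)
                            + real (tdeg \<mu>) / real d"
    proof -
      have "R = (real (card (UNIV :: 'a set)) - 1) * (real (card (UNIV :: 'n set)) - real (card (UNIV :: 'm set)) / real d)
                            + real (tdeg \<mu>) / real d"
        unfolding R_def k1 N_def M_def T_def ..
      moreover have "real (tdeg P) \<le> real D" using P(1) by simp
      ultimately show ?thesis using DR by linarith
    qed
    show "mpeval P (\<lambda>_. 0) \<noteq> 0" using P(2) Q0 by simp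
    show "{y. mpeval P y \<noteq> 0} \<subseteq> range (polymap \<phi>)"
    proof
      fix y assume "y \<in> {y. mpeval P y \<noteq> 0}"
      then have "Q y \<noteq> 0" using P(2) by simp
      then have "{a. polymap \<phi> a = y} \<noteq> {}" using Qsupp[of y] by (metis sum.empty)
      then show "y \<in> range (polymap \<phi>)" by auto
    qed
  qed
qed

end
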